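(* Let $(\Omega,\mathcal{F},P)$ be a probability space, $\mathcal{X}$ a measurable space, $X:\Omega\to\mathcal{X}$ a measurable map (an act), $u:\mathcal{X}\to\mathbb{R}$ a measurable function, and $\beta\in(-1,\infty)$. For $v\in\mathbb{R}$ define $k_v:\mathcal{X}\to\mathbb{R}$ by $k_v(x)=\dfrac{u(x)+\beta v}{1+\beta}$ if $u(x)\ge v$ and $k_v(x)=u(x)$ if $u(x)<v$. Suppose $\mathbb{E}[u(X)]$ exists and is finite. Then for $v\in\mathbb{R}$ the following are equivalent: (1) $v=\mathbb{E}[k_v(X)]$; (2) $\mathbb{E}[(u(X)-v)^+]=(1+\beta)\,\mathbb{E}[(v-u(X))^+]$. In particular, such a $v$ exists and is unique.
   Context: $s^+=\max\{s,0\}$. The unique solution is denoted $\mathbb{E}_\beta[u(X)]$ (the expectile, or "expectiled utility"). *)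

theory Defs
  imports "HOL-Probability.Probability"
begin

definition kfun :: "('x \<Rightarrow> real) \<Rightarrow> real \<Rightarrow> real \<Rightarrow> 'x \<Rightarrow> real" where
  "kfun u \<beta> v x = (if u x \<ge> v then (u x + \<beta> * v) / (1 + \<beta>) else u x)"

definition pos_part :: "real \<Rightarrow> real" where
  "pos_part s = max s 0"

end

theory Submission
  imports Defs
begin

lemma kfun_eq:
  assumes "\<beta> > -1"
  shows "kfun u \<beta> v x = u x - \<beta> / (1 + \<beta>) * pos_part (u x - v)"
proof -
  have "1 + \<beta> > 0" using assms by simp
  show ?thesis
  proof (cases "u x \<ge> v")
    case True
    then show ?thesis using \<open>1 + \<beta> > 0\<close> unfolding kfun_def pos_part_def
      by (simp add: max_def divide_simps) (simp add: algebra_simps)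
  next
    case False
    then show ?thesis unfolding kfun_def pos_part_def by (simp add: max_def)
  qed
qed

lemma cont_lip:
  fixes A :: "real \<Rightarrow> real"
  assumes "\<And>v w. \<bar>A v - A w\<bar> \<le> \<bar>v - w\<bar>"
  shows "isCont A x"
  unfolding continuous_at_eps_delta
proof (intro allI impI)
  fix e :: real assume "e > 0"
  then show "\<exists>d>0. \<forall>y. dist y x < d \<longrightarrow> dist (A y) (A x) < e"
    using assms by (intro exI[of _ e]) (auto simp: dist_real_def intro: le_less_trans)
qed

theorem proposition1:
  fixes M :: "'w measure" and N :: "'x measure"
    and X :: "'w \<Rightarrow> 'x" and u :: "'x \<Rightarrow> real" and \<beta> :: real
  assumes "prob_space M"
    and "X \<in> measurable M N"
    and "u \<in> borel_measurable N"
    and "\<beta> > -1"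
    and "integrable M (\<lambda>\<omega>. u (X \<omega>))"
  shows "(\<forall>v::real. (v = prob_space.expectation M (\<lambda>\<omega>. kfun u \<beta> v (X \<omega>))) \<longleftrightarrow>
            (prob_space.expectation M (\<lambda>\<omega>. pos_part (u (X \<omega>) - v))
               = (1 + \<beta>) * prob_space.expectation M (\<lambda>\<omega>. pos_part (v - u (X \<omega>)))))
         \<and> (\<exists>!v::real. v = prob_space.expectation M (\<lambda>\<omega>. kfun u \<beta> v (X \<omega>)))"
proof -
  interpret prob_space M by fact
  define Y where "Y = (\<lambda>\<omega>. u (X \<omega>))"
  have iY: "integrable M Y" using assms(5) by (simp add: Y_def)
  define m where "m = expectation Y"
  define A where "A = (\<lambda>v. expectation (\<lambda>\<omega>. pos_part (Y \<omega> - v)))"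
  define B where "B = (\<lambda>v. expectation (\<lambda>\<omega>. pos_part (v - Y \<omega>)))"
  define c where "c = \<beta> / (1 + \<beta>)"
  have bp: "1 + \<beta> > 0" using assms(4) by simp
  have c1: "c < 1" using bp by (simp add: c_def field_simps)
  have iA: "integrable M (\<lambda>\<omega>. pos_part (Y \<omega> - v))" for v
    unfolding pos_part_def using iY by (intro integrable_max) auto
  have iB: "integrable M (\<lambda>\<omega>. pos_part (v - Y \<omega>))" for v
    unfolding pos_part_def using iY by (intro integrable_max) auto
  have K: "expectation (\<lambda>\<omega>. kfun u \<beta> v (X \<omega>)) = m - c * A v" for v
  proof -
    have "expectation (\<lambda>\<omega>. kfun u \<beta> v (X \<omega>)) = expectation (\<lambda>\<omega>. Y \<omega> - c * pos_part (Y \<omega> - v))"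
      by (rule Bochner_Integration.integral_cong) (simp_all add: kfun_eq[OF assms(4)] Y_def c_def)
    also have "\<dots> = m - c * A v"
      using iY iA by (simp add: m_def A_def)
    finally show ?thesis .
  qed
  have AB: "A v - B v = m - v" for v
  proof -
    have "A v - B v = expectation (\<lambda>\<omega>. pos_part (Y \<omega> - v) - pos_part (v - Y \<omega>))"
      using iA iB by (simp add: A_def B_def)
    also have "\<dots> = expectation (\<lambda>\<omega>. Y \<omega> - v)"
      by (rule Bochner_Integration.integral_cong) (auto simp: pos_part_def max_def)
    also have "\<dots> = m - v" using iY by (simp add: m_def prob_space)
    finally show ?thesis .
  qed
  have A0: "A v \<ge> 0" for v
    unfolding A_def pos_part_def by (rule integral_nonneg_AE) auto
  have Amono: "A w \<le> A v" if "v \<le> w" for v w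
    unfolding A_def using iA that
    by (intro integral_mono) (auto simp: pos_part_def max_def)
  have Alip: "A v \<le> A w + (w - v)" if "v \<le> w" for v w
  proof -
    have "A v \<le> expectation (\<lambda>\<omega>. pos_part (Y \<omega> - w) + (w - v))"
      unfolding A_def using iA that
      by (intro integral_mono) (auto simp: pos_part_def max_def)
    also have "\<dots> = A w + (w - v)" using iA by (simp add: A_def prob_space)
    finally show ?thesis .
  qed
  have Alip2: "\<bar>A v - A w\<bar> \<le> \<bar>v - w\<bar>" for v w
    using Amono[of v w] Amono[of w v] Alip[of v w] Alip[of w v]
    by (cases "v \<le> w") auto
  define h where "h = (\<lambda>v. m - c * A v - v)"
  have hcont: "isCont h x" for x
    unfolding h_def using cont_lip[OF Alip2] by (intro continuous_intros) auto
  have hdec: "h w < h v" if "v < w" for v w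
  proof -
    have d: "0 \<le> A v - A w" "A v - A w \<le> w - v"
      using Amono[of v w] Alip[of v w] that by auto
    have "h v - h w = (w - v) - c * (A v - A w)" by (simp add: h_def algebra_simps)
    moreover have "c * (A v - A w) < w - v"
    proof (cases "c \<ge> 0")
      case True
      have "c * (A v - A w) \<le> c * (w - v)" using d True by (intro mult_left_mono) auto
      also have "\<dots> < w - v" using c1 that by (simp add: mult_less_cancel_right1)
      finally show ?thesis .
    next
      case False
      then have "c * (A v - A w) \<le> 0" using d by (simp add: mult_nonpos_nonneg)
      then show ?thesis using that by simp
    qed
    ultimately show ?thesis by simp
  qed
  have ex: "\<exists>v. h v = 0"
  proof (cases "c \<ge> 0")
    case True
    define a where "a = m - c * A m / (1 - c)"
    have am: "a \<le> m" using True c1 A0[of m] by (simp add: a_def)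
    have "h m \<le> 0" using True A0[of m] by (simp add: h_def)
    moreover have "0 \<le> h a"
    proof -
      have "A a \<le> A m + (m - a)" using Alip[OF am] .
      then have "c * A a \<le> c * (A m + (m - a))" using True by (intro mult_left_mono) auto
      moreover have "(1 - c) * (m - a) = c * A m" using c1 by (simp add: a_def field_simps)
      ultimately show ?thesis by (simp add: h_def algebra_simps)
    qed
    ultimately show ?thesis using IVT2[of h m 0 a] am hcont by auto
  next
    case False
    define b where "b = m - c * A m"
    have mb: "m \<le> b" using False A0[of m] by (simp add: b_def mult_nonpos_nonneg)
    have "0 \<le> h m" using False A0[of m] by (simp add: h_def mult_nonpos_nonneg)
    moreover have "h b \<le> 0"
    proof -
      have "A b \<le> A m" using Amono[OF mb] .
      then have "c * A m \<le> c * A b" using False by (intro mult_left_mono_neg) auto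
      then show ?thesis by (simp add: h_def b_def algebra_simps)
    qed
    ultimately show ?thesis using IVT2[of h b 0 m] mb hcont by auto
  qed
  have P1: "(v = expectation (\<lambda>\<omega>. kfun u \<beta> v (X \<omega>))) \<longleftrightarrow>
      (expectation (\<lambda>\<omega>. pos_part (u (X \<omega>) - v)) = (1 + \<beta>) * expectation (\<lambda>\<omega>. pos_part (v - u (X \<omega>))))" for v
  proof -
    have e1: "expectation (\<lambda>\<omega>. pos_part (u (X \<omega>) - v)) = A v"
      and e2: "expectation (\<lambda>\<omega>. pos_part (v - u (X \<omega>))) = B v" by (simp_all add: A_def B_def Y_def)
    have "(v = m - c * A v) \<longleftrightarrow> (1 + \<beta>) * v = (1 + \<beta>) * m - \<beta> * A v"
      using bp by (simp add: c_def field_simps)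
    also have "\<dots> \<longleftrightarrow> A v = (1 + \<beta>) * B v"
    proof -
      have "\<beta> * (m - v) = \<beta> * (A v - B v)" using AB[of v] by simp
      then have "\<beta> * m - \<beta> * v = \<beta> * A v - \<beta> * B v" by (simp only: right_diff_distrib)
      then have "\<beta> * m = \<beta> * v + \<beta> * A v - \<beta> * B v" "m = v + A v - B v"
        using AB[of v] by linarith+
      then show ?thesis unfolding distrib_right mult_1_left by linarith
    qed
    finally show ?thesis by (simp add: K e1 e2)
  qed
  have P2: "\<exists>!v. v = expectation (\<lambda>\<omega>. kfun u \<beta> v (X \<omega>))"
  proof -
    obtain v where v: "h v = 0" using ex by blast
    have eq: "(w = expectation (\<lambda>\<omega>. kfun u \<beta> w (X \<omega>))) \<longleftrightarrow> h w = 0" for w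
      by (auto simp: K h_def)
    show ?thesis
    proof (rule ex1I[of _ v])
      show "v = expectation (\<lambda>\<omega>. kfun u \<beta> v (X \<omega>))" using v eq by simp
    next
      fix w assume "w = expectation (\<lambda>\<omega>. kfun u \<beta> w (X \<omega>))"
      then have "h w = 0" using eq by simp
      then show "w = v" using v hdec[of v w] hdec[of w v] by (cases "v < w"; cases "w < v") auto
    qed
  qed
  show ?thesis using P1 P2 by blast
qed

end
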